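(* Let $n\geq 3$ and let $K_n$ be the complete graph on $n$ vertices. Then $\lim_{p\to\infty}\|M_{K_n}\|_p^p$ exists and $$\lim_{p\to\infty}\|M_{K_n}\|_p^p=\sup_{\alpha>1,\ k\in\{1,\dots,n\}}\frac{k\alpha^{n/k}+\alpha(n-k)}{k\alpha^{n/k}+n-k}.$$
   Context: For a finite connected graph $G=(V,E)$ with graph distance $d_G$ and $f:V\to\mathbb{R}$, $M_Gf(v)=\sup_{r\geq 0}\frac{1}{|B(v,r)|}\sum_{u\in B(v,r)}|f(u)|$, where $B(v,r)=\{u\in V: d_G(u,v)\le r\}$. For $g:V\to\mathbb{R}$, $\|g\|_p=(\sum_{v\in V}|g(v)|^p)^{1/p}$ and $\|M_G\|_p=\sup_{f\neq 0}\|M_Gf\|_p/\|f\|_p$. *)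

theory Defs
  imports "HOL-Analysis.Analysis"
begin

definition graph_dist :: "('a \<times> 'a) set \<Rightarrow> 'a \<Rightarrow> 'a \<Rightarrow> nat" where
  "graph_dist E u v = (LEAST k. (u, v) \<in> E ^^ k)"

definition gball :: "'a set \<Rightarrow> ('a \<times> 'a) set \<Rightarrow> 'a \<Rightarrow> real \<Rightarrow> 'a set" where
  "gball V E v r = {u \<in> V. real (graph_dist E u v) \<le> r}"

definition max_op :: "'a set \<Rightarrow> ('a \<times> 'a) set \<Rightarrow> ('a \<Rightarrow> real) \<Rightarrow> 'a \<Rightarrow> real" where
  "max_op V E f v = (SUP r \<in> {r::real. r \<ge> 0}.
      (1 / real (card (gball V E v r))) * (\<Sum>u \<in> gball V E v r. \<bar>f u\<bar>))"

definition lp_norm :: "'a set \<Rightarrow> real \<Rightarrow> ('a \<Rightarrow> real) \<Rightarrow> real" where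
  "lp_norm V p g = (\<Sum>v \<in> V. \<bar>g v\<bar> powr p) powr (1 / p)"

definition max_op_norm :: "'a set \<Rightarrow> ('a \<times> 'a) set \<Rightarrow> real \<Rightarrow> real" where
  "max_op_norm V E p = (SUP f \<in> {f :: 'a \<Rightarrow> real. \<exists>v\<in>V. f v \<noteq> 0}.
      lp_norm V p (max_op V E f) / lp_norm V p f)"

definition K_vert :: "nat \<Rightarrow> nat set" where
  "K_vert n = {..<n}"

definition K_edges :: "nat \<Rightarrow> (nat \<times> nat) set" where
  "K_edges n = {(u, v). u < n \<and> v < n \<and> u \<noteq> v}"

end

theory Submission
  imports Defs "HOL-Real_Asymp.Real_Asymp"
begin

lemma exp_le_quad: fixes x :: real assumes "x \<le> 0" shows "exp x \<le> 1 + x + x^2/2"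
proof -
  obtain t where "exp x = (\<Sum>m<3. (x ^ m) / fact m) + (exp t / fact 3) * x ^ 3"
    using Maclaurin_exp_le[of x 3] by blast
  moreover have "x^3 \<le> 0" using assms by (simp add: power_le_zero_eq)
  moreover have "exp t / fact 3 \<ge> 0" by simp
  ultimately have "exp x \<le> (\<Sum>m<3. (x ^ m) / fact m)"
    by (smt (verit) mult_nonneg_nonpos)
  also have "\<dots> = 1 + x + x^2/2" by (simp add: numeral_3_eq_3 eval_nat_numeral)
  finally show ?thesis .
qed

lemma mean_pow_bound:
  fixes z :: "nat \<Rightarrow> real" and n :: nat and p \<eta> :: real
  assumes n: "n \<ge> 1" and p: "p \<ge> 1" and eta: "0 < \<eta>" 
    and zb: "\<And>v. v < n \<Longrightarrow> \<eta> \<le> z v \<and> z v \<le> 1"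
  shows "((\<Sum>v<n. z v powr (1/p)) / n) powr p
     \<le> exp ((ln \<eta>)^2 / (2*p)) * (\<Prod>v<n. z v) powr (1 / n)"
proof -
  define t where "t = 1/p"
  have t: "0 < t" "t \<le> 1" using p by (auto simp: t_def)
  define K where "K = (ln \<eta>)^2/2"
  define A where "A = (\<Sum>v<n. ln (z v)) / n"
  have zpos: "z v > 0" if "v < n" for v using zb[OF that] eta by linarith
  have each: "z v powr t \<le> 1 + t * ln (z v) + t^2 * K" if v: "v < n" for v
  proof -
    have l0: "ln (z v) \<le> 0" using zb[OF v] zpos[OF v] by simp
    have l1: "ln \<eta> \<le> ln (z v)" using zb[OF v] eta by simp
    have "z v powr t = exp (t * ln (z v))" using zpos[OF v] by (simp add: powr_def)
    also have "\<dots> \<le> 1 + t * ln (z v) + (t * ln (z v))^2/2"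
      by (rule exp_le_quad) (use t l0 in \<open>simp add: mult_nonneg_nonpos\<close>)
    also have "(t * ln (z v))^2 \<le> (t * ln \<eta>)^2"
    proof -
      have "t * ln \<eta> \<le> t * ln (z v)" using t l1 by (simp add: mult_left_mono)
      moreover have "t * ln (z v) \<le> 0" using t l0 by (simp add: mult_nonneg_nonpos)
      ultimately have "\<bar>t * ln (z v)\<bar> \<le> \<bar>t * ln \<eta>\<bar>" by linarith
      thus ?thesis by (simp only: abs_le_square_iff)
    qed
    hence "1 + t * ln (z v) + (t * ln (z v))^2/2 \<le> 1 + t * ln (z v) + t^2 * K"
      by (simp add: K_def power_mult_distrib)
    finally show ?thesis .
  qed
  have "(\<Sum>v<n. z v powr t) / n \<le> (\<Sum>v<n. 1 + t * ln (z v) + t^2 * K) / n"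
    using n by (intro divide_right_mono sum_mono each) auto
  also have "\<dots> = 1 + (t * A + t^2 * K)"
    using n by (simp add: sum.distrib A_def sum_distrib_left[symmetric] field_simps)
  also have "\<dots> \<le> exp (t * A + t^2 * K)" by (rule exp_ge_add_one_self)
  finally have le: "(\<Sum>v<n. z v powr t) / n \<le> exp (t * A + t^2 * K)" .
  have nn: "0 \<le> (\<Sum>v<n. z v powr t) / n" by (simp add: sum_nonneg)
  have "((\<Sum>v<n. z v powr t) / n) powr p \<le> exp (t * A + t^2 * K) powr p"
    using le nn p by (intro powr_mono2) auto
  also have "\<dots> = exp (A + K / p)"
    using p by (simp add: powr_def t_def field_simps power2_eq_square)
  also have "\<dots> = exp (K/p) * exp A" by (simp add: exp_add)
  also have "exp A = (\<Prod>v<n. z v) powr (1 / n)"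
  proof -
    have pp: "(\<Prod>v<n. z v) > 0" using zpos by (intro prod_pos) auto
    have "ln (\<Prod>v<n. z v) = (\<Sum>v<n. ln (z v))" using zpos by (subst ln_prod) (auto, fastforce)
    moreover have "(\<Prod>v<n. z v) powr (1/n) = exp (1/n * ln (\<Prod>v<n. z v))"
      using pp unfolding powr_def by (metis less_irrefl)
    ultimately show ?thesis by (simp add: A_def)
  qed
  finally show ?thesis by (simp add: K_def t_def)
qed


definition val :: "nat \<Rightarrow> real \<Rightarrow> nat \<Rightarrow> real" where
  "val n a k = (real k * a powr (real n / real k) + a * real (n - k))
              / (real k * a powr (real n / real k) + real (n - k))"

definition Sval :: "nat \<Rightarrow> real" where
  "Sval n = (SUP ak \<in> {(\<alpha>::real, k::nat). \<alpha> > 1 \<and> k \<in> {1..n}}. val n (fst ak) (snd ak))"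

lemma val_bounds:
  assumes a: "a > 1" and k: "1 \<le> k" "k \<le> n"
  shows "1 \<le> val n a k" "val n a k \<le> n"
proof -
  define A where "A = a powr (real n / real k)"
  have "a powr 1 \<le> A" unfolding A_def using a k by (intro powr_mono) auto
  hence aA: "a \<le> A" using a by simp
  have kpos: "real k > 0" using k by simp
  have Apos: "A > 0" using aA a by simp
  have den: "real k * A + real (n - k) > 0" using kpos Apos by (simp add: add_pos_nonneg)
  have "real (n-k) \<le> a * real (n - k)" using a by (simp add: mult_le_cancel_right1)
  thus "1 \<le> val n a k" using den by (simp add: val_def A_def[symmetric])
  have "real k * A + a * real (n - k) \<le> real n * (real k * A + real (n - k))"
  proof -
    have "a * real (n - k) \<le> A * real (n-k)" using aA by (simp add: mult_right_mono)
    also have "A * real (n-k) \<le> (real n - 1) * (real k * A)" 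
    proof -
      have e: "real (n-k) = real n - real k" using k by (simp add: of_nat_diff)
      have "(real n - 1) * 1 \<le> (real n - 1) * real k" using k by (intro mult_left_mono) auto
      hence "real (n-k) \<le> (real n - 1) * real k" using e k by simp
      hence "A * real (n-k) \<le> A * ((real n - 1) * real k)" using Apos by (intro mult_left_mono) auto
      thus ?thesis by (simp add: algebra_simps)
    qed
    finally have "real k * A + a * real (n - k) \<le> real n * (real k * A)" by (simp add: algebra_simps)
    also have "\<dots> \<le> real n * (real k * A + real (n - k))" by (simp add: mult_left_mono)
    finally show ?thesis .
  qed
  thus "val n a k \<le> n" using den by (simp add: val_def A_def[symmetric] divide_le_eq)
qed

lemma bdd_val: "bdd_above ((\<lambda>ak. val n (fst ak) (snd ak)) ` {(\<alpha>::real, k::nat). \<alpha> > 1 \<and> k \<in> {1..n}})"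
  unfolding bdd_above_def by (rule exI[of _ "real n"]) (auto intro: val_bounds)

lemma val_le_S: "a > 1 \<Longrightarrow> 1 \<le> k \<Longrightarrow> k \<le> n \<Longrightarrow> val n a k \<le> Sval n"
  unfolding Sval_def by (rule cSUP_upper2[OF bdd_val[where n=n], of "(a,k)"]) auto

lemma S_ge1: "n \<ge> 1 \<Longrightarrow> 1 \<le> Sval n"
  using val_le_S[of 2 n n] val_bounds(1)[of 2 n n] by simp


lemma amgm:
  fixes x :: "'a \<Rightarrow> real"
  assumes "finite S" "S \<noteq> {}" "\<And>i. i \<in> S \<Longrightarrow> x i \<ge> 0"
  shows "real (card S) * (\<Prod>i\<in>S. x i) powr (1 / card S) \<le> (\<Sum>i\<in>S. x i)"
proof -
  have c: "real (card S) > 0" using assms by (simp add: card_gt_0_iff)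
  have "(\<Prod>i\<in>S. x i) powr (1 / card S) \<le> (\<Sum>i\<in>S. x i / card S)"
    by (rule arith_geom_mean[OF assms])
  also have "\<dots> = (\<Sum>i\<in>S. x i) / card S" by (simp add: sum_divide_distrib)
  finally show ?thesis using c by (simp add: field_simps)
qed

lemma alg: fixes k m a b :: real assumes "k>0" "m>0"
  shows "a/m + (k+m)/k * ((b + a)/(k+m) - a/m) = b/k"
proof -
  have km: "k + m \<noteq> 0" using assms by simp
  have 1: "(k+m)/k * ((b + a)/(k+m)) = (b+a)/k" using km by simp
  have 2: "(k+m)/k * (a/m) = a/m + a/k" using assms by (simp add: field_simps)
  have "(k+m)/k * ((b + a)/(k+m) - a/m) = (b+a)/k - (a/m + a/k)"
    unfolding right_diff_distrib 1 2 ..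
  thus ?thesis by (simp add: add_divide_distrib)
qed

lemma Rinf:
  assumes n: "n \<ge> 1" and zpos: "\<And>v. v < n \<Longrightarrow> z v > 0"
  shows "(\<Sum>v<n. max (z v) ((\<Prod>v<n. z v) powr (1/n))) \<le> Sval n * (\<Sum>v<n. z v)"
proof -
  define G where "G = (\<Prod>v<n. z v) powr (1/n)"
  define P where "P = (\<Prod>v<n. z v)"
  have Ppos: "P > 0" unfolding P_def using zpos by (intro prod_pos) auto
  have Gpos: "G > 0" unfolding G_def P_def[symmetric] using Ppos by simp
  have zsum_pos: "(\<Sum>v<n. z v) \<ge> 0" using zpos by (intro sum_nonneg) (auto intro: less_imp_le)
  have amgm_all: "real n * G \<le> (\<Sum>v<n. z v)"
  proof -
    have "real (card {..<n}) * (\<Prod>v\<in>{..<n}. z v) powr (1 / card {..<n}) \<le> (\<Sum>v\<in>{..<n}. z v)"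
      by (rule amgm) (use n zpos in \<open>auto intro: less_imp_le simp: lessThan_empty_iff\<close>)
    thus ?thesis by (simp add: G_def)
  qed
  define Bs where "Bs = {v\<in>{..<n}. G \<le> z v}"
  define Ss where "Ss = {v\<in>{..<n}. z v < G}"
  have un: "Bs \<union> Ss = {..<n}" and dis: "Bs \<inter> Ss = {}" by (auto simp: Bs_def Ss_def)
  have finB: "finite Bs" and finS: "finite Ss" by (auto simp: Bs_def Ss_def)
  show ?thesis
  proof (cases "Ss = {}")
    case True
    have "(\<Sum>v<n. max (z v) G) = (\<Sum>v<n. z v)"
      using True by (intro sum.cong) (auto simp: Ss_def max_def)
    also have "\<dots> \<le> Sval n * (\<Sum>v<n. z v)" using S_ge1[OF n] zsum_pos
      by (simp add: mult_le_cancel_right1)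
    finally show ?thesis by (simp add: G_def)
  next
    case False
    define k where "k = card Bs"
    have cardsum: "k + card Ss = n" unfolding k_def using card_Un_disjoint[OF finB finS dis] un by simp
    have cS: "card Ss \<ge> 1" using False finS by (simp add: Suc_le_eq card_gt_0_iff)
    have Bne: "Bs \<noteq> {}"
    proof
      assume "Bs = {}"
      hence SS: "Ss = {..<n}" using un by simp
      have "(\<Sum>v<n. z v) < (\<Sum>v<n. G)"
        using n SS by (intro sum_strict_mono) (auto simp: Ss_def)
      thus False using amgm_all by simp
    qed
    have k1: "1 \<le> k" using Bne finB by (simp add: k_def Suc_le_eq card_gt_0_iff)
    have kn: "k < n" using cardsum cS by simp
    define m where "m = real (n - k)"
    have m: "m = real (card Ss)" "m > 0" "real n = real k + m"
      using cardsum kn by (auto simp: m_def)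
    define PS where "PS = (\<Prod>v\<in>Ss. z v)"
    define PB where "PB = (\<Prod>v\<in>Bs. z v)"
    have PSpos: "PS > 0" unfolding PS_def using zpos by (intro prod_pos) (auto simp: Ss_def)
    have PBpos: "PB > 0" unfolding PB_def using zpos by (intro prod_pos) (auto simp: Bs_def)
    have Psplit: "P = PB * PS" unfolding P_def PB_def PS_def
      using prod.union_disjoint[OF finB finS dis, of z] un by simp
    define \<sigma> where "\<sigma> = PS powr (1 / m)"
    have spos: "\<sigma> > 0" using PSpos by (simp add: \<sigma>_def)
    define Y where "Y = (\<Sum>v\<in>Ss. z v)"
    define X where "X = (\<Sum>v\<in>Bs. z v)"
    have Y0: "m * \<sigma> \<le> Y" unfolding Y_def \<sigma>_def PS_def m(1)
      using amgm[OF finS False, of z] zpos by (auto simp: Ss_def intro: less_imp_le)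
    have "Y < (\<Sum>v\<in>Ss. G)" unfolding Y_def using False finS by (intro sum_strict_mono) (auto simp: Ss_def)
    hence YG: "Y < m * G" using m(1) by simp
    have sG: "\<sigma> < G" using Y0 YG m(2) by (smt (verit) mult_le_cancel_left_pos)
    define \<alpha> where "\<alpha> = G / \<sigma>"
    have a1: "\<alpha> > 1" using sG spos by (simp add: \<alpha>_def)
    define A where "A = \<alpha> powr (real n / real k)"
    have key: "PB powr (1 / real k) = \<sigma> * A"
    proof -
      have kpos: "real k > 0" using k1 by simp
      have lG: "ln G = (ln PB + ln PS) / real n" using Ppos Psplit PBpos PSpos
        by (simp add: G_def P_def[symmetric] ln_powr ln_mult)
      have ls: "ln \<sigma> = ln PS / m" using PSpos by (simp add: \<sigma>_def ln_powr)
      have la: "ln \<alpha> = ln G - ln \<sigma>" using Gpos spos by (simp add: \<alpha>_def ln_div)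
      have Apos: "A > 0" using a1 by (simp add: A_def)
      have "ln (\<sigma> * A) = ln \<sigma> + real n / real k * ln \<alpha>"
        using spos a1 by (simp add: A_def ln_mult ln_powr)
      also have "\<dots> = ln PB / real k"
        unfolding la lG ls m(3) using alg[OF kpos m(2), of "ln PS" "ln PB"] by (simp add: add_ac)
      also have "\<dots> = ln (PB powr (1 / real k))" using PBpos by (simp add: ln_powr)
      finally have "ln (\<sigma> * A) = ln (PB powr (1 / real k))" .
      hence "\<sigma> * A = PB powr (1 / real k)" using spos Apos PBpos by (subst (asm) ln_inj_iff) auto
      thus ?thesis by simp
    qed
    have X0: "real k * (\<sigma> * A) \<le> X" unfolding X_def key[symmetric] PB_def k_def
      using amgm[OF finB Bne, of z] zpos by (auto simp: Bs_def intro: less_imp_le)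
    have lhs: "(\<Sum>v<n. max (z v) G) = X + m * G"
    proof -
      have "(\<Sum>v<n. max (z v) G) = (\<Sum>v\<in>Bs. max (z v) G) + (\<Sum>v\<in>Ss. max (z v) G)"
        using sum.union_disjoint[OF finB finS dis] un by simp
      also have "(\<Sum>v\<in>Bs. max (z v) G) = X" unfolding X_def by (intro sum.cong) (auto simp: Bs_def)
      also have "(\<Sum>v\<in>Ss. max (z v) G) = (\<Sum>v\<in>Ss. G)" by (intro sum.cong) (auto simp: Ss_def)
      finally show ?thesis using m(1) by simp
    qed
    have rhs: "(\<Sum>v<n. z v) = X + Y" unfolding X_def Y_def
      using sum.union_disjoint[OF finB finS dis] un by simp
    define w where "w = val n \<alpha> k"
    have Apos: "A > 0" using a1 by (simp add: A_def)
    have den: "real k * A + m > 0" using Apos m(2) k1 by (simp add: add_pos_pos)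
    have wden: "w * (real k * A + m) = real k * A + \<alpha> * m"
      using den by (simp add: w_def val_def A_def[symmetric] m_def[symmetric] field_simps)
    have w1: "w \<ge> 1" using val_bounds(1)[OF a1 k1 less_imp_le[OF kn]] by (simp add: w_def)
    have wS: "w \<le> Sval n" using val_le_S[OF a1 k1 less_imp_le[OF kn]] by (simp add: w_def)
    have Gs: "G = \<sigma> * \<alpha>" using spos by (simp add: \<alpha>_def)
    have f1: "w * Y \<ge> w * (m * \<sigma>)" using Y0 w1 by (intro mult_left_mono) auto
    have f2: "(w - 1) * X \<ge> (w - 1) * (real k * (\<sigma> * A))" using X0 w1 by (intro mult_left_mono) auto
    have f3: "\<sigma> * (w * (real k * A + m)) = \<sigma> * (real k * A + \<alpha> * m)" using wden by simp
    have "X + m * G \<le> w * (X + Y)"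
      using f1 f2 f3 unfolding Gs by (simp add: algebra_simps)
    also have "\<dots> \<le> Sval n * (X + Y)" using wS rhs zsum_pos by (intro mult_right_mono) auto
    finally show ?thesis using lhs rhs by (simp add: G_def)
  qed
qed


lemma core:
  fixes b :: "nat \<Rightarrow> real"
  assumes n: "n \<ge> 1" and p: "p \<ge> 1" and eta: "0 < \<eta>" "\<eta> \<le> 1"
    and bnn: "\<And>v. v < n \<Longrightarrow> b v \<ge> 0" and bsum: "(\<Sum>v<n. b v powr p) = 1"
  shows "(\<Sum>v<n. max (b v) ((\<Sum>u<n. b u) / n) powr p)
          \<le> Sval n * exp ((ln \<eta>)^2 / (2*p)) * (1 + n * \<eta>)"
proof -
  define y where "y v = b v powr p" for v
  define z where "z v = max (y v) \<eta>" for v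
  define E where "E = exp ((ln \<eta>)^2 / (2*p))"
  define G where "G = (\<Prod>v<n. z v) powr (1 / n)"
  define mb where "mb = (\<Sum>u<n. b u) / n"
  define mu where "mu = (\<Sum>v<n. z v powr (1/p)) / n"
  have y1: "y v \<le> 1" if "v < n" for v
  proof -
    have "y v \<le> (\<Sum>v<n. y v)" using that by (intro member_le_sum) (auto simp: y_def)
    thus ?thesis using bsum by (simp add: y_def)
  qed
  have zb: "\<eta> \<le> z v \<and> z v \<le> 1" if "v < n" for v using y1[OF that] eta by (auto simp: z_def)
  have zpos: "z v > 0" if "v < n" for v using zb[OF that] eta by linarith
  have bu: "b v \<le> z v powr (1/p)" if v: "v < n" for v
  proof -
    have "b v = y v powr (1/p)" using bnn[OF v] p by (simp add: y_def powr_powr)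
    also have "\<dots> \<le> z v powr (1/p)" using p by (intro powr_mono2) (auto simp: y_def z_def)
    finally show ?thesis .
  qed
  have mbmu: "mb \<le> mu" unfolding mb_def mu_def using n
    by (intro divide_right_mono sum_mono bu) auto
  have mbnn: "mb \<ge> 0" unfolding mb_def using bnn by (auto intro!: sum_nonneg divide_nonneg_nonneg)
  have muE: "mu powr p \<le> E * G" unfolding mu_def E_def G_def
    by (rule mean_pow_bound[OF n p eta(1) zb])
  have E1: "E \<ge> 1" using p by (simp add: E_def)
  have each: "max (b v) mb powr p \<le> E * max (z v) G" if v: "v < n" for v
  proof -
    have "max (b v) mb powr p \<le> max (z v) (E * G)"
    proof (cases "mb \<le> b v")
      case True
      thus ?thesis by (simp add: max_def y_def[symmetric] z_def)
    next
      case False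
      hence "max (b v) mb powr p = mb powr p" by simp
      also have "\<dots> \<le> mu powr p" using mbmu mbnn p by (intro powr_mono2) auto
      also have "\<dots> \<le> E * G" by (rule muE)
      finally show ?thesis by simp
    qed
    also have "\<dots> \<le> E * max (z v) G"
    proof -
      have mx: "max (z v) G \<ge> 0" using zpos[OF v] by simp
      have "z v \<le> max (z v) G" by simp
      also have "\<dots> \<le> E * max (z v) G" using E1 mx mult_right_mono[OF E1 mx] by simp
      finally have 1: "z v \<le> E * max (z v) G" .
      have 2: "E * G \<le> E * max (z v) G" using E1 by (intro mult_left_mono) auto
      show ?thesis using 1 2 by simp
    qed
    finally show ?thesis .
  qed
  have "(\<Sum>v<n. max (b v) mb powr p) \<le> (\<Sum>v<n. E * max (z v) G)" by (intro sum_mono each) auto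
  also have "\<dots> = E * (\<Sum>v<n. max (z v) G)" by (simp add: sum_distrib_left)
  also have "\<dots> \<le> E * (Sval n * (\<Sum>v<n. z v))"
    using Rinf[OF n zpos] E1 by (intro mult_left_mono) (auto simp: G_def)
  also have "(\<Sum>v<n. z v) \<le> (\<Sum>v<n. y v + \<eta>)" 
    using eta by (intro sum_mono) (auto simp: z_def y_def)
  also have "\<dots> = 1 + n * \<eta>" using bsum by (simp add: sum.distrib y_def)
  finally have "(\<Sum>v<n. max (b v) mb powr p) \<le> E * (Sval n * (1 + n * \<eta>))"
    using E1 S_ge1[OF n] by (simp add: mult_left_mono)
  thus ?thesis by (simp add: mb_def E_def mult_ac)
qed


lemma dist_K:
  assumes "u < n" "v < n"
  shows "graph_dist (K_edges n) u v = (if u = v then 0 else 1)"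
proof (cases "u = v")
  case True
  thus ?thesis unfolding graph_dist_def using Least_eq_0[of "\<lambda>k. (v, v) \<in> K_edges n ^^ k"] by simp
next
  case False
  have "(LEAST k. (u, v) \<in> K_edges n ^^ k) = 1"
  proof (rule Least_equality)
    show "(u, v) \<in> K_edges n ^^ 1" using assms False by (simp add: K_edges_def)
    fix y assume "(u, v) \<in> K_edges n ^^ y"
    thus "1 \<le> y" using False by (cases y) auto
  qed
  thus ?thesis using False by (simp add: graph_dist_def)
qed

lemma gball_K:
  assumes "v < n"
  shows "gball (K_vert n) (K_edges n) v r = (if r < 1 then (if r \<ge> 0 then {v} else {}) else {..<n})"
  using assms by (auto simp: gball_def K_vert_def dist_K split: if_splits)

lemma maxop_K:
  assumes v: "v < n"
  shows "max_op (K_vert n) (K_edges n) f v = max \<bar>f v\<bar> ((\<Sum>u<n. \<bar>f u\<bar>) / n)"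
proof -
  define h where "h r = (1 / real (card (gball (K_vert n) (K_edges n) v r))) *
      (\<Sum>u \<in> gball (K_vert n) (K_edges n) v r. \<bar>f u\<bar>)" for r
  have h: "h r = (if r < 1 then \<bar>f v\<bar> else (\<Sum>u<n. \<bar>f u\<bar>) / n)" if "r \<ge> 0" for r
    using that v by (auto simp: h_def gball_K)
  have bdd: "bdd_above (h ` {r. r \<ge> 0})"
    unfolding bdd_above_def by (rule exI[of _ "max \<bar>f v\<bar> ((\<Sum>u<n. \<bar>f u\<bar>) / n)"]) (auto simp: h)
  have "(SUP r \<in> {r::real. r \<ge> 0}. h r) = max \<bar>f v\<bar> ((\<Sum>u<n. \<bar>f u\<bar>) / n)"
  proof (rule antisym)
    show "(SUP r \<in> {r::real. r \<ge> 0}. h r) \<le> max \<bar>f v\<bar> ((\<Sum>u<n. \<bar>f u\<bar>) / n)"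
      by (rule cSUP_least) (auto simp: h)
    have "h 0 \<le> (SUP r \<in> {r::real. r \<ge> 0}. h r)" by (rule cSUP_upper[OF _ bdd]) auto
    moreover have "h 1 \<le> (SUP r \<in> {r::real. r \<ge> 0}. h r)" by (rule cSUP_upper[OF _ bdd]) auto
    ultimately show "max \<bar>f v\<bar> ((\<Sum>u<n. \<bar>f u\<bar>) / n) \<le> (SUP r \<in> {r::real. r \<ge> 0}. h r)"
      by (simp add: h)
  qed
  thus ?thesis by (simp add: max_op_def h_def)
qed


definition Qf :: "nat \<Rightarrow> real \<Rightarrow> (nat \<Rightarrow> real) \<Rightarrow> real" where
  "Qf n p f = lp_norm (K_vert n) p (max_op (K_vert n) (K_edges n) f) / lp_norm (K_vert n) p f"

definition U :: "nat \<Rightarrow> real \<Rightarrow> real" where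
  "U n p = Sval n * exp ((ln (1/p))^2 / (2*p)) * (1 + n * (1/p))"

lemma Q_formula:
  assumes p: "p > 0" and f: "\<exists>v\<in>K_vert n. f v \<noteq> 0"
  shows "Qf n p f powr p = (\<Sum>v<n. max \<bar>f v\<bar> ((\<Sum>u<n. \<bar>f u\<bar>) / n) powr p) / (\<Sum>v<n. \<bar>f v\<bar> powr p)"
    and "Qf n p f \<ge> 0" and "(\<Sum>v<n. \<bar>f v\<bar> powr p) > 0"
proof -
  define N where "N = (\<Sum>v<n. max \<bar>f v\<bar> ((\<Sum>u<n. \<bar>f u\<bar>) / n) powr p)"
  define D where "D = (\<Sum>v<n. \<bar>f v\<bar> powr p)"
  obtain w where w: "w < n" "f w \<noteq> 0" using f by (auto simp: K_vert_def)
  have "0 < \<bar>f w\<bar> powr p" using w by simp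
  also have "\<dots> \<le> D" unfolding D_def using w by (intro member_le_sum) auto
  finally have Dpos: "D > 0" .
  have Nnn: "N \<ge> 0" unfolding N_def by (intro sum_nonneg) auto
  have l1: "lp_norm (K_vert n) p (max_op (K_vert n) (K_edges n) f) = N powr (1/p)"
    unfolding lp_norm_def N_def K_vert_def
    by (intro arg_cong[where f="\<lambda>x. x powr (1/p)"] sum.cong) (auto simp: maxop_K[unfolded K_vert_def])
  have l2: "lp_norm (K_vert n) p f = D powr (1/p)" by (simp add: lp_norm_def D_def K_vert_def)
  have Q: "Qf n p f = N powr (1/p) / D powr (1/p)" by (simp add: Qf_def l1 l2)
  show "Qf n p f \<ge> 0" by (simp add: Q)
  show "Qf n p f powr p = N / D" using p Nnn Dpos
    by (simp add: Q powr_divide[symmetric] powr_powr)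
  show "D > 0" by (rule Dpos)
qed

lemma N_upper:
  assumes n: "n \<ge> 1" and p: "p \<ge> 1" and ann: "\<And>v. a v \<ge> (0::real)"
    and D: "(\<Sum>v<n. a v powr p) > 0"
  shows "(\<Sum>v<n. max (a v) ((\<Sum>u<n. a u) / n) powr p) \<le> U n p * (\<Sum>v<n. a v powr p)"
proof -
  define D where "D = (\<Sum>v<n. a v powr p)"
  define c where "c = D powr (1/p)"
  have cpos: "c > 0" using D by (simp add: c_def D_def)
  have cp: "c powr p = D" using D p by (simp add: c_def D_def powr_powr)
  define b where "b v = a v / c" for v
  have bnn: "b v \<ge> 0" for v using ann cpos by (simp add: b_def)
  have bp: "b v powr p = a v powr p / D" for v using ann cpos cp by (simp add: b_def powr_divide)
  have bsum: "(\<Sum>v<n. b v powr p) = 1" using D by (simp add: bp sum_divide_distrib[symmetric] D_def)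
  have mb: "(\<Sum>u<n. b u) / n = ((\<Sum>u<n. a u) / n) / c" by (simp add: b_def sum_divide_distrib[symmetric])
  have mx: "max (b v) ((\<Sum>u<n. b u) / n) powr p = max (a v) ((\<Sum>u<n. a u) / n) powr p / D" for v
  proof -
    have "max (b v) ((\<Sum>u<n. b u) / n) = max (a v) ((\<Sum>u<n. a u) / n) / c"
      using cpos by (simp add: b_def sum_divide_distrib[symmetric] max_divide_distrib_right mult.commute)
    moreover have "max (a v) ((\<Sum>u<n. a u) / n) \<ge> 0" using ann by (simp add: le_max_iff_disj)
    ultimately show ?thesis using cpos cp by (simp add: powr_divide)
  qed
  have "(\<Sum>v<n. max (b v) ((\<Sum>u<n. b u) / n) powr p) \<le> U n p"
    unfolding U_def using core[OF n p _ _ bnn bsum, of "1/p"] p by simp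
  hence "(\<Sum>v<n. max (a v) ((\<Sum>u<n. a u) / n) powr p) / D \<le> U n p"
    by (simp add: mx sum_divide_distrib[symmetric])
  thus ?thesis using D by (simp add: D_def divide_le_eq mult.commute)
qed


lemma split_sets:
  assumes "k \<le> n"
  shows "{..<n} \<inter> {x. x < k} = {..<k}" "card ({..<n} \<inter> - {x. x < k}) = n - k"
proof -
  show "{..<n} \<inter> {x. x < k} = {..<k}" using assms by auto
  have "{..<n} \<inter> - {x. x < k} = {k..<n}" by auto
  thus "card ({..<n} \<inter> - {x. x < k}) = n - k" by simp
qed

lemma sum_if: "k \<le> n \<Longrightarrow> (\<Sum>v<n. if v < k then A else B) = real k * A + real (n - k) * (B::real)"
  by (simp add: sum.If_cases split_sets)

lemma prod_if: "k \<le> n \<Longrightarrow> (\<Prod>v<n. if v < k then A else 1) = (A::real) ^ k"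
  by (simp add: prod.If_cases split_sets)

lemma lower:
  assumes a: "\<alpha> > 1" and k: "1 \<le> k" "k \<le> n" and p: "p \<ge> 1"
  defines "f \<equiv> (\<lambda>v. if v < k then \<alpha> powr (real n / (real k * p)) else 1)"
  shows "\<exists>v\<in>K_vert n. f v \<noteq> 0" and "val n \<alpha> k \<le> Qf n p f powr p"
proof -
  define x where "x = \<alpha> powr (real n / (real k * p))"
  have xpos: "x > 0" using a by (simp add: x_def)
  have fx: "f = (\<lambda>v. if v < k then x else 1)" unfolding f_def x_def by (rule refl)
  show ex: "\<exists>v\<in>K_vert n. f v \<noteq> 0" using k xpos by (intro bexI[of _ 0]) (auto simp: K_vert_def fx)
  have af: "\<bar>f v\<bar> = f v" for v using xpos by (simp add: fx)
  have n1: "real n \<ge> 1" using k by simp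
  have kpos: "real k > 0" using k by simp
  define m where "m = (\<Sum>u<n. \<bar>f u\<bar>) / n"
  have prodf: "(\<Prod>v<n. f v) = \<alpha> powr (real n / p)"
    unfolding fx using prod_if[OF k(2), of x] xpos a kpos
    by (simp add: x_def powr_power)
  have amgm_f: "real n * (\<Prod>v<n. f v) powr (1 / n) \<le> (\<Sum>v<n. f v)"
  proof -
    have "real (card {..<n}) * (\<Prod>v\<in>{..<n}. f v) powr (1 / card {..<n}) \<le> (\<Sum>v\<in>{..<n}. f v)"
      by (rule amgm) (use k xpos in \<open>auto simp: fx lessThan_empty_iff\<close>)
    thus ?thesis by simp
  qed
  have "(\<Prod>v<n. f v) powr (1 / n) = \<alpha> powr (1/p)"
    using a n1 by (simp add: prodf powr_powr)
  hence mge: "\<alpha> powr (1/p) \<le> m" using amgm_f n1 by (simp add: m_def af field_simps)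
  have mp: "\<alpha> \<le> m powr p"
  proof -
    have "\<alpha> = (\<alpha> powr (1/p)) powr p" using a p by (simp add: powr_powr)
    also have "\<dots> \<le> m powr p" using mge p by (intro powr_mono2) auto
    finally show ?thesis .
  qed
  have xp: "x powr p = \<alpha> powr (real n / real k)" using p kpos by (simp add: x_def powr_powr)
  have Neq: "(\<Sum>v<n. (if v < k then \<alpha> powr (real n / real k) else \<alpha>)) \<le> (\<Sum>v<n. max \<bar>f v\<bar> m powr p)"
  proof (rule sum_mono)
    fix v assume "v \<in> {..<n}"
    show "(if v < k then \<alpha> powr (real n / real k) else \<alpha>) \<le> max \<bar>f v\<bar> m powr p"
    proof (cases "v < k")
      case True
      have "x powr p \<le> max x m powr p" using xpos p by (intro powr_mono2) auto
      thus ?thesis using True xp xpos by (simp add: af fx)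
    next
      case False
      have "m powr p \<le> max 1 m powr p" using mge p a order.trans[OF powr_ge_zero mge] by (intro powr_mono2) auto
      thus ?thesis using False mp by (simp add: af fx)
    qed
  qed
  have Deq: "(\<Sum>v<n. \<bar>f v\<bar> powr p) = real k * \<alpha> powr (real n / real k) + real (n - k)"
  proof -
    have "(\<Sum>v<n. \<bar>f v\<bar> powr p) = (\<Sum>v<n. if v < k then \<alpha> powr (real n / real k) else 1)"
      using xpos by (intro sum.cong) (auto simp: af fx xp)
    thus ?thesis using sum_if[OF k(2)] by simp
  qed
  have Dpos: "(\<Sum>v<n. \<bar>f v\<bar> powr p) > 0" using Q_formula(3)[OF _ ex] p by simp
  have "val n \<alpha> k = (\<Sum>v<n. (if v < k then \<alpha> powr (real n / real k) else \<alpha>)) / (\<Sum>v<n. \<bar>f v\<bar> powr p)"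
    unfolding Deq sum_if[OF k(2)] val_def by (simp add: mult.commute)
  also have "\<dots> \<le> (\<Sum>v<n. max \<bar>f v\<bar> m powr p) / (\<Sum>v<n. \<bar>f v\<bar> powr p)"
    using Neq Dpos by (intro divide_right_mono) auto
  also have "\<dots> = Qf n p f powr p" using Q_formula(1)[OF _ ex] p by (simp add: m_def)
  finally show "val n \<alpha> k \<le> Qf n p f powr p" .
qed


lemma U_lim: "((\<lambda>p. U n p) \<longlongrightarrow> Sval n) at_top"
proof -
  have 1: "((\<lambda>p::real. exp ((ln (1/p))^2 / (2*p))) \<longlongrightarrow> 1) at_top" by real_asymp
  have 2: "((\<lambda>p::real. 1 + real n * (1/p)) \<longlongrightarrow> 1) at_top" by real_asymp
  have "((\<lambda>p. Sval n * exp ((ln (1/p))^2 / (2*p)) * (1 + real n * (1/p))) \<longlongrightarrow> Sval n * 1 * 1) at_top"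
    by (intro tendsto_mult tendsto_const 1 2)
  thus ?thesis by (simp add: U_def)
qed

theorem theorem3p3:
  fixes n :: nat
  assumes "n \<ge> 3"
  shows "((\<lambda>p::real. max_op_norm (K_vert n) (K_edges n) p powr p) \<longlongrightarrow>
           (SUP ak \<in> {(\<alpha>::real, k::nat). \<alpha> > 1 \<and> k \<in> {1..n}}.
              (real (snd ak) * fst ak powr (real n / real (snd ak)) + fst ak * real (n - snd ak))
              / (real (snd ak) * fst ak powr (real n / real (snd ak)) + real (n - snd ak))))
         at_top"
proof -
  have n: "n \<ge> 1" using assms by simp
  define F where "F = {f :: nat \<Rightarrow> real. \<exists>v\<in>K_vert n. f v \<noteq> 0}"
  define \<Phi> where "\<Phi> p = max_op_norm (K_vert n) (K_edges n) p" for p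
  have \<Phi>: "\<Phi> p = (SUP f\<in>F. Qf n p f)" for p by (simp add: \<Phi>_def max_op_norm_def F_def Qf_def)
  have one: "(\<lambda>_. 1) \<in> F" using n unfolding F_def K_vert_def by (intro CollectI bexI[of _ 0]) auto
  have bounds: "Sval n \<le> \<Phi> p powr p \<and> \<Phi> p powr p \<le> U n p" if p: "p \<ge> 1" for p
  proof -
    have Qpow: "Qf n p f powr p \<le> U n p" if f: "f \<in> F" for f
    proof -
      have "Qf n p f powr p = (\<Sum>v<n. max \<bar>f v\<bar> ((\<Sum>u<n. \<bar>f u\<bar>) / n) powr p) / (\<Sum>v<n. \<bar>f v\<bar> powr p)"
        using Q_formula(1)[of p n f] f p by (simp add: F_def)
      also have "\<dots> \<le> U n p"
        using N_upper[OF n p, of "\<lambda>v. \<bar>f v\<bar>"] Q_formula(3)[of p n f] f p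
        by (simp add: F_def divide_le_eq)
      finally show ?thesis .
    qed
    have Qnn: "Qf n p f \<ge> 0" if "f \<in> F" for f using Q_formula(2)[of p n f] that p by (simp add: F_def)
    have Unn: "U n p \<ge> 0" using Qpow[OF one] order.trans[OF powr_ge_zero] by blast
    have Qle: "Qf n p f \<le> U n p powr (1/p)" if f: "f \<in> F" for f
    proof -
      have "Qf n p f = (Qf n p f powr p) powr (1/p)" using Qnn[OF f] p by (simp add: powr_powr)
      also have "\<dots> \<le> U n p powr (1/p)" using Qpow[OF f] p by (intro powr_mono2) auto
      finally show ?thesis .
    qed
    have bddQ: "bdd_above (Qf n p ` F)" unfolding bdd_above_def using Qle by blast
    have Phi_le: "\<Phi> p \<le> U n p powr (1/p)" unfolding \<Phi> using one Qle by (intro cSUP_least) auto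
    have Phi_ge: "Qf n p f \<le> \<Phi> p" if "f \<in> F" for f unfolding \<Phi> using bddQ that by (rule cSUP_upper[rotated])
    have Phinn: "\<Phi> p \<ge> 0" using Phi_ge[OF one] Qnn[OF one] by linarith
    have up: "\<Phi> p powr p \<le> U n p"
    proof -
      have "\<Phi> p powr p \<le> (U n p powr (1/p)) powr p" using Phi_le Phinn p by (intro powr_mono2) auto
      also have "\<dots> = U n p" using Unn p by (simp add: powr_powr)
      finally show ?thesis .
    qed
    have low: "Sval n \<le> \<Phi> p powr p"
      unfolding Sval_def
    proof (rule cSUP_least)
      show "{(\<alpha>::real, k::nat). \<alpha> > 1 \<and> k \<in> {1..n}} \<noteq> {}" proof -
        have "(2::real, 1::nat) \<in> {(\<alpha>::real, k::nat). \<alpha> > 1 \<and> k \<in> {1..n}}" using n by simp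
        thus ?thesis by blast
      qed
      fix ak assume "ak \<in> {(\<alpha>::real, k::nat). \<alpha> > 1 \<and> k \<in> {1..n}}"
      then obtain \<alpha> k where ak: "ak = (\<alpha>, k)" "\<alpha> > 1" "1 \<le> k" "k \<le> n" by auto
      define f where "f = (\<lambda>v. if v < k then \<alpha> powr (real n / (real k * p)) else 1)"
      have fF: "f \<in> F" using lower(1)[OF ak(2-4) p] by (simp add: F_def f_def)
      have "val n \<alpha> k \<le> Qf n p f powr p" using lower(2)[OF ak(2-4) p] by (simp add: f_def)
      also have "\<dots> \<le> \<Phi> p powr p" using Phi_ge[OF fF] Qnn[OF fF] p by (intro powr_mono2) auto
      finally show "val n (fst ak) (snd ak) \<le> \<Phi> p powr p" by (simp add: ak)
    qed
    show ?thesis using up low by simp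
  qed
  have "((\<lambda>p. \<Phi> p powr p) \<longlongrightarrow> Sval n) at_top"
  proof (rule tendsto_sandwich[OF _ _ tendsto_const U_lim])
    show "\<forall>\<^sub>F p in at_top. Sval n \<le> \<Phi> p powr p"
      using eventually_ge_at_top[of "1::real"] by eventually_elim (use bounds in auto)
    show "\<forall>\<^sub>F p in at_top. \<Phi> p powr p \<le> U n p"
      using eventually_ge_at_top[of "1::real"] by eventually_elim (use bounds in auto)
  qed
  thus ?thesis by (simp add: \<Phi>_def Sval_def val_def)
qed

end
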